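(* Let $R$ be a finite Frobenius ring, $\chi,\chi'$ generating characters of $R$, $M=\{x_0=0,x_1,\ldots,x_n\}$ a finite $R$-bimodule, and $B$ a non-degenerate bilinear form on $M$. Then $H=[\chi(B(x_i,x_j))]_{0\le i,j\le n}$ and $H'=[\chi'(B(x_i,x_j))]_{0\le i,j\le n}$ are equivalent by a row permutation, i.e. $H'$ is obtained from $H$ by permuting its rows.
   Context: A bilinear form on $M$ is a biadditive map $B:M\times M\to R$ with $B(rx,y)=rB(x,y)$ and $B(x,yr)=B(x,y)r$; it is non-degenerate if its left and right kernels are zero. A character of $R$ is a group homomorphism $(R,+)\to\mathbb{C}^*$; it is generating if its kernel contains no nonzero left ideal and no nonzero right ideal of $R$. *)

theory Defs
  imports Complex_Main "HOL-Combinatorics.Permutations"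
begin

definition left_ideal :: "'r::ring_1 set \<Rightarrow> bool" where
  "left_ideal I \<longleftrightarrow> 0 \<in> I \<and> (\<forall>a\<in>I. \<forall>b\<in>I. a - b \<in> I) \<and> (\<forall>r. \<forall>a\<in>I. r * a \<in> I)"

definition right_ideal :: "'r::ring_1 set \<Rightarrow> bool" where
  "right_ideal I \<longleftrightarrow> 0 \<in> I \<and> (\<forall>a\<in>I. \<forall>b\<in>I. a - b \<in> I) \<and> (\<forall>r. \<forall>a\<in>I. a * r \<in> I)"

definition character :: "('r::ring_1 \<Rightarrow> complex) \<Rightarrow> bool" where
  "character \<chi> \<longleftrightarrow> (\<forall>a. \<chi> a \<noteq> 0) \<and> (\<forall>a b. \<chi> (a + b) = \<chi> a * \<chi> b)"

definition generating_character :: "('r::ring_1 \<Rightarrow> complex) \<Rightarrow> bool" where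
  "generating_character \<chi> \<longleftrightarrow> character \<chi> \<and>
     (\<forall>I. left_ideal I \<and> I \<subseteq> {a. \<chi> a = 1} \<longrightarrow> I = {0}) \<and>
     (\<forall>I. right_ideal I \<and> I \<subseteq> {a. \<chi> a = 1} \<longrightarrow> I = {0})"

text \<open>Finite Frobenius ring, via the standard characterization of finite Frobenius
  rings (Wood) as those admitting a generating character.\<close>
definition finite_frobenius_ring :: "'r::ring_1 itself \<Rightarrow> bool" where
  "finite_frobenius_ring TYPE('r) \<longleftrightarrow> finite (UNIV :: 'r set) \<and>
     (\<exists>\<chi> :: 'r \<Rightarrow> complex. generating_character \<chi>)"

definition bimodule :: "('r::ring_1 \<Rightarrow> 'm::ab_group_add \<Rightarrow> 'm) \<Rightarrow> ('m \<Rightarrow> 'r \<Rightarrow> 'm) \<Rightarrow> bool" where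
  "bimodule lm rm \<longleftrightarrow>
     (\<forall>r x y. lm r (x + y) = lm r x + lm r y) \<and>
     (\<forall>r s x. lm (r + s) x = lm r x + lm s x) \<and>
     (\<forall>r s x. lm (r * s) x = lm r (lm s x)) \<and>
     (\<forall>x. lm 1 x = x) \<and>
     (\<forall>r x y. rm (x + y) r = rm x r + rm y r) \<and>
     (\<forall>r s x. rm x (r + s) = rm x r + rm x s) \<and>
     (\<forall>r s x. rm x (r * s) = rm (rm x r) s) \<and>
     (\<forall>x. rm x 1 = x) \<and>
     (\<forall>r s x. lm r (rm x s) = rm (lm r x) s)"

definition bilinear_form ::
  "('r::ring_1 \<Rightarrow> 'm::ab_group_add \<Rightarrow> 'm) \<Rightarrow> ('m \<Rightarrow> 'r \<Rightarrow> 'm) \<Rightarrow> ('m \<Rightarrow> 'm \<Rightarrow> 'r) \<Rightarrow> bool" where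
  "bilinear_form lm rm B \<longleftrightarrow>
     (\<forall>x y z. B (x + y) z = B x z + B y z) \<and>
     (\<forall>x y z. B x (y + z) = B x y + B x z) \<and>
     (\<forall>r x y. B (lm r x) y = r * B x y) \<and>
     (\<forall>r x y. B x (rm y r) = B x y * r)"

definition non_degenerate :: "('m::ab_group_add \<Rightarrow> 'm \<Rightarrow> 'r::ring_1) \<Rightarrow> bool" where
  "non_degenerate B \<longleftrightarrow>
     {x. \<forall>y. B x y = 0} = {0} \<and> {y. \<forall>x. B x y = 0} = {0}"

end

theory Submission
  imports Defs
begin

lemma char_zero_one: "character \<chi> \<Longrightarrow> \<chi> 0 = 1"
proof -
  assume c: "character \<chi>"
  hence "\<chi> 0 = \<chi> 0 * \<chi> 0" "\<chi> 0 \<noteq> 0" unfolding character_def by (metis add_0)+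
  thus ?thesis by (metis mult_cancel_left1)
qed

lemma char_diff: "character \<chi> \<Longrightarrow> \<chi> (a - b) = \<chi> a / \<chi> b"
proof -
  assume c: "character \<chi>"
  have "\<chi> a = \<chi> (a - b) * \<chi> b" using c unfolding character_def by (metis diff_add_cancel)
  moreover have "\<chi> b \<noteq> 0" using c unfolding character_def by auto
  ultimately show ?thesis by simp
qed

lemma char_neg: "character \<chi> \<Longrightarrow> \<chi> a * \<chi> (- a) = 1"
  using char_zero_one[of \<chi>] unfolding character_def by (metis add.right_inverse)

lemma char_sum_zero:
  fixes \<theta> :: "'r::ring_1 \<Rightarrow> complex"
  assumes c: "character \<theta>" and f: "finite (UNIV::'r set)" and b: "\<theta> b \<noteq> 1"
  shows "(\<Sum>a\<in>UNIV. \<theta> a) = 0"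
proof -
  have "(\<Sum>a\<in>UNIV. \<theta> a) = (\<Sum>a\<in>UNIV. \<theta> (a + b))"
    by (rule sum.reindex_bij_witness[where j="\<lambda>a. a - b" and i="\<lambda>a. a + b"]) auto
  also have "\<dots> = \<theta> b * (\<Sum>a\<in>UNIV. \<theta> a)"
    using c unfolding character_def by (simp add: sum_distrib_left mult.commute)
  finally show ?thesis using b
    by (metis mult_cancel_right1)
qed

lemma gen_char_repr:
  fixes \<chi> \<psi> :: "'r::ring_1 \<Rightarrow> complex"
  assumes g: "generating_character \<chi>" and c: "character \<psi>" and f: "finite (UNIV::'r set)"
  shows "\<exists>r. \<forall>a. \<psi> a = \<chi> (r * a)"
proof -
  have cx: "character \<chi>" using g unfolding generating_character_def by auto
  define S where "S r = (\<Sum>a\<in>UNIV. \<psi> a * \<chi> (- (r * a)))" for r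
  have inner: "(\<Sum>r\<in>UNIV. \<chi> (- (r * a))) = (if a = 0 then of_nat (card (UNIV::'r set)) else 0)" for a
  proof (cases "a = 0")
    case True
    then show ?thesis using char_zero_one[OF cx] by simp
  next
    case False
    have ct: "character (\<lambda>r. \<chi> (- (r * a)))"
    proof -
      have "\<chi> (- ((r + s) * a)) = \<chi> (- (r * a)) * \<chi> (- (s * a))" for r s
      proof -
        have "- ((r + s) * a) = - (r * a) + - (s * a)" by (simp add: distrib_right)
        thus ?thesis using cx unfolding character_def by metis
      qed
      thus ?thesis using cx unfolding character_def by auto
    qed
    have "\<exists>r. \<chi> (- (r * a)) \<noteq> 1"
    proof (rule ccontr)
      assume "\<not> ?thesis"
      hence h: "\<chi> (- (r * a)) = 1" for r by auto
      have "\<chi> (r * a) = 1" for r using h[of r] char_neg[OF cx, of "r*a"] by simp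
      moreover have "left_ideal {r * a | r. True}"
        unfolding left_ideal_def
      proof (intro conjI ballI allI)
        show "0 \<in> {r * a | r. True}" by (rule CollectI, rule exI[of _ 0]) simp
      next
        fix u v assume "u \<in> {r * a | r. True}" "v \<in> {r * a | r. True}"
        then obtain r1 r2 where "u = r1 * a" "v = r2 * a" by blast
        hence "u - v = (r1 - r2) * a" by (simp add: left_diff_distrib)
        thus "u - v \<in> {r * a | r. True}" by blast
      next
        fix s u assume "u \<in> {r * a | r. True}"
        then obtain r1 where "u = r1 * a" by blast
        hence "s * u = (s * r1) * a" by (simp add: mult.assoc)
        thus "s * u \<in> {r * a | r. True}" by blast
      qed
      ultimately have "{r * a | r. True} = {0}"
        using g unfolding generating_character_def by blast
      hence "1 * a = 0" by blast
      thus False using False by simp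
    qed
    then obtain r where "\<chi> (- (r * a)) \<noteq> 1" by blast
    then show ?thesis using char_sum_zero[OF ct f] False by simp
  qed
  have "(\<Sum>r\<in>UNIV. S r) = (\<Sum>a\<in>UNIV. \<psi> a * (\<Sum>r\<in>UNIV. \<chi> (- (r * a))))"
    unfolding S_def sum_distrib_left by (rule sum.swap)
  also have "\<dots> = (\<Sum>a\<in>(UNIV::'r set). if a = 0 then \<psi> 0 * of_nat (card (UNIV::'r set)) else 0)"
    using inner by (intro sum.cong refl) auto
  also have "\<dots> = \<psi> 0 * of_nat (card (UNIV::'r set))"
    using f by (simp add: sum.delta)
  also have "\<dots> \<noteq> 0" using f char_zero_one[OF c] by simp
  finally have "(\<Sum>r\<in>UNIV. S r) \<noteq> 0" .
  then obtain r where Sr: "S r \<noteq> 0" using sum.neutral[of UNIV S] by blast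
  have ct: "character (\<lambda>a. \<psi> a * \<chi> (- (r * a)))"
  proof -
    have "\<chi> (- (r * (a + b))) = \<chi> (- (r * a)) * \<chi> (- (r * b))" for a b
    proof -
      have "- (r * (a + b)) = - (r * a) + - (r * b)" by (simp add: distrib_left)
      thus ?thesis using cx unfolding character_def by metis
    qed
    thus ?thesis using c cx unfolding character_def by (auto simp: ac_simps)
  qed
  have h: "\<psi> a * \<chi> (- (r * a)) = 1" for a
    using char_sum_zero[OF ct f] Sr unfolding S_def by blast
  have "\<psi> a = \<chi> (r * a)" for a
  proof -
    have "\<psi> a = \<psi> a * (\<chi> (r * a) * \<chi> (- (r * a)))" using char_neg[OF cx, of "r*a"] by simp
    also have "\<dots> = \<chi> (r * a) * (\<psi> a * \<chi> (- (r * a)))" by (simp add: ac_simps)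
    also have "\<dots> = \<chi> (r * a)" using h[of a] by simp
    finally show ?thesis .
  qed
  thus ?thesis by blast
qed

theorem propositionA4:
  fixes \<chi> \<chi>' :: "'r::ring_1 \<Rightarrow> complex"
    and lm :: "'r \<Rightarrow> 'm::ab_group_add \<Rightarrow> 'm" and rm :: "'m \<Rightarrow> 'r \<Rightarrow> 'm"
    and B :: "'m \<Rightarrow> 'm \<Rightarrow> 'r"
    and x :: "nat \<Rightarrow> 'm" and n :: nat
  assumes "finite_frobenius_ring TYPE('r)"
    and "generating_character \<chi>" and "generating_character \<chi>'"
    and "finite (UNIV :: 'm set)" and "bimodule lm rm"
    and "bij_betw x {0..n} (UNIV :: 'm set)" and "x 0 = 0"
    and "bilinear_form lm rm B" and "non_degenerate B"
  shows "\<exists>\<pi>. \<pi> permutes {0..n} \<and>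
           (\<forall>i\<in>{0..n}. \<forall>j\<in>{0..n}. \<chi>' (B (x i) (x j)) = \<chi> (B (x (\<pi> i)) (x j)))"
proof -
  have Ba1: "\<And>a b y. B (a + b) y = B a y + B b y"
    and Ba2: "\<And>a b y. B y (a + b) = B y a + B y b"
    and Blm: "\<And>s a y. B (lm s a) y = s * B a y"
    and Brm: "\<And>s a y. B a (rm y s) = B a y * s"
    using assms(8) unfolding bilinear_form_def by blast+
  have cx': "character \<chi>'" using assms(3) unfolding generating_character_def by auto
  obtain r where r: "\<And>a. \<chi>' a = \<chi> (r * a)"
    using gen_char_repr[OF assms(2) cx'] assms(1) unfolding finite_frobenius_ring_def by blast
  define g where "g m = lm r m" for m
  have key: "\<chi>' (B m y) = \<chi> (B (g m) y)" for m y
    using r Blm unfolding g_def by simp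
  have Bdiff: "B (a - b) y = B a y - B b y" for a b y
  proof -
    have "B a y = B (a - b + b) y" by simp
    also have "\<dots> = B (a - b) y + B b y" by (rule Ba1)
    finally have "B a y = B (a - b) y + B b y" .
    thus ?thesis by (simp add: algebra_simps)
  qed
  have Bdiff2: "B z (a - b) = B z a - B z b" for a b z
  proof -
    have "B z a = B z (a - b + b)" by simp
    also have "\<dots> = B z (a - b) + B z b" by (rule Ba2)
    finally have "B z a = B z (a - b) + B z b" .
    thus ?thesis by (simp add: algebra_simps)
  qed
  have B0: "B z 0 = 0" for z using Bdiff2[of z 0 0] by simp
  have inj: "inj g"
  proof (rule injI)
    fix m1 m2 assume e: "g m1 = g m2"
    define z where "z = m1 - m2"
    have ri: "right_ideal {B z y | y. True}"
      unfolding right_ideal_def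
    proof (intro conjI ballI allI)
      have "0 = B z 0" using B0[of z] by simp
      thus "0 \<in> {B z y | y. True}" by blast
    next
      fix u v assume "u \<in> {B z y | y. True}" "v \<in> {B z y | y. True}"
      then obtain y1 y2 where "u = B z y1" "v = B z y2" by blast
      hence "u - v = B z (y1 - y2)" by (simp add: Bdiff2)
      thus "u - v \<in> {B z y | y. True}" by blast
    next
      fix s u assume "u \<in> {B z y | y. True}"
      then obtain y1 where "u = B z y1" by blast
      hence "u * s = B z (rm y1 s)" using Brm by simp
      thus "u * s \<in> {B z y | y. True}" by blast
    qed
    have sub: "{B z y | y. True} \<subseteq> {a. \<chi>' a = 1}"
    proof
      fix u assume "u \<in> {B z y | y. True}"
      then obtain y where u: "u = B z y" by blast
      have "\<chi>' u = \<chi>' (B m1 y) / \<chi>' (B m2 y)"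
        unfolding u z_def Bdiff by (rule char_diff[OF cx'])
      also have "\<dots> = 1"
      proof -
        have q: "\<chi>' (B m1 y) = \<chi>' (B m2 y)" using key[of m1 y] key[of m2 y] e by simp
        have "\<chi>' (B m2 y) \<noteq> 0" using cx' unfolding character_def by blast
        thus ?thesis using q by simp
      qed
      finally show "u \<in> {a. \<chi>' a = 1}" by simp
    qed
    have RI: "\<And>I. right_ideal I \<Longrightarrow> I \<subseteq> {a. \<chi>' a = 1} \<Longrightarrow> I = {0}"
      using assms(3) unfolding generating_character_def by blast
    have eq0: "{B z y | y. True} = {0}" by (rule RI[OF ri sub])
    have "B z y = 0" for y
    proof -
      have "B z y \<in> {B z y | y. True}" by blast
      thus ?thesis unfolding eq0 by simp
    qed
    hence zin: "z \<in> {x. \<forall>y. B x y = 0}" by simp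
    have nd: "{x. \<forall>y. B x y = 0} = {0}" using assms(9) unfolding non_degenerate_def by (rule conjunct1)
    have "z = 0" using zin unfolding nd by simp
    thus "m1 = m2" unfolding z_def by simp
  qed
  have bg: "bij g" unfolding bij_def using inj finite_UNIV_inj_surj[OF assms(4) inj] by (rule conjI)
  define \<pi> where "\<pi> i = (if i \<in> {0..n} then the_inv_into {0..n} x (g (x i)) else i)" for i
  have bx: "bij_betw x {0..n} UNIV" by fact
  have bc: "bij_betw (the_inv_into {0..n} x \<circ> (g \<circ> x)) {0..n} {0..n}"
    by (rule bij_betw_trans[OF bij_betw_trans[OF bx bg] bij_betw_the_inv_into[OF bx]])
  have "bij_betw \<pi> {0..n} {0..n}"
    by (rule bij_betw_cong[THEN iffD2, OF _ bc]) (simp add: \<pi>_def)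
  hence perm: "\<pi> permutes {0..n}"
    by (rule bij_imp_permutes) (simp add: \<pi>_def)
  have xp: "x (\<pi> i) = g (x i)" if "i \<in> {0..n}" for i
    using that unfolding \<pi>_def by (simp add: f_the_inv_into_f_bij_betw[OF bx])
  show ?thesis
  proof (intro exI[of _ \<pi>] conjI ballI)
    show "\<pi> permutes {0..n}" by (rule perm)
  next
    fix i j assume "i \<in> {0..n}" "j \<in> {0..n}"
    show "\<chi>' (B (x i) (x j)) = \<chi> (B (x (\<pi> i)) (x j))"
      unfolding key xp[OF \<open>i \<in> {0..n}\<close>] ..
  qed
qed

end
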